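(* Let $d\ge1$, $0<c\le\infty$, $X=(0,c)$, $X_{\mathrm{SYM}}=(-c,0)\cup(0,c)$, $\mathbb{X}=(X_{\mathrm{SYM}})^d$. For $i=1,\dots,d$ let $w_i\in C^2(X)$ be strictly positive, $p_i\in C^2(X)$ real-valued and nonvanishing, $q_i\in C^1(X)$ real-valued, $a_i\ge0$ constants, $\mu_i(dx)=w_i(x)dx$ on $X$, $\delta_i=p_i\frac{d}{dx}+q_i$, $\delta_i^*=-p_i\frac{d}{dx}+q_i-p_i\frac{w_i'}{w_i}-p_i'$, $L_i=a_i+\delta_i^*\delta_i$. Assume for each $i$ there is an orthonormal basis $\{\varphi^{(i)}_k:k\in\mathbb{N}\}$ of $L^2(X,\mu_i)$ with $\varphi^{(i)}_k\in C^\infty(X)$, $L_i\varphi^{(i)}_k=\lambda^{(i)}_k\varphi^{(i)}_k$, $\lambda^{(i)}_0<\lambda^{(i)}_1<\dots\to\infty$, $\delta_i\varphi^{(i)}_k\in L^2(X,\mu_i)$ and $\langle\delta_i\varphi^{(i)}_k,\delta_i\varphi^{(i)}_m\rangle_{\mu_i}=\langle\delta_i^*\delta_i\varphi^{(i)}_k,\varphi^{(i)}_m\rangle_{\mu_i}$ for all $k,m$; assume moreover $a_i=\lambda^{(i)}_0$ for every $i$. Extend $w_i,p_i,\varphi^{(i)}_k$ evenly and $q_i$ oddly to $X_{\mathrm{SYM}}$, define $\Phi^{(i)}_n=\frac1{\sqrt2}\varphi^{(i)}_{n/2}$ for even $n$, $\Phi^{(i)}_n=-\frac1{\sqrt2}(\lambda^{(i)}_{(n+1)/2}-a_i)^{-1/2}\delta_i\varphi^{(i)}_{(n+1)/2}$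 for odd $n$, $\Phi_n=\Phi^{(1)}_{n_1}\otimes\cdots\otimes\Phi^{(d)}_{n_d}$ for $n\in\mathbb{N}^d$, with the convention $\Phi_n\equiv0$ if $n\in\mathbb{Z}^d\setminus\mathbb{N}^d$, and $\langle n\rangle_j=\lfloor\frac{n_j+1}2\rfloor$. Let $$D_jf(x)=p_j(x_j)\partial_{x_j}f(x)+q_j(x_j)\tfrac{f(x)+f(\sigma_jx)}{2}+\Big[p_j(x_j)\tfrac{w_j'(x_j)}{w_j(x_j)}+p_j'(x_j)-q_j(x_j)\Big]\tfrac{f(x)-f(\sigma_jx)}{2}$$ ($\sigma_j$ the reflection changing the sign of the $j$th coordinate), and for $\ell\in\mathbb{N}^d$ let $D^\ell=D_1^{\ell_1}\cdots D_d^{\ell_d}$. Then for every $\ell\in\mathbb{N}^d\setminus\{(0,\dots,0)\}$ and $n\in\mathbb{N}^d$, $$D^\ell\Phi_n=(-1)^{|\ell|/2+|(n+1/2)\widetilde{\ell}|}\Big(\prod_{j=1}^d\big(\lambda^{(j)}_{\langle n\rangle_j}-a_j\big)^{\ell_j/2}\Big)\Phi_{n-(-1)^n\widetilde{\ell}},$$ where $|\ell|=\ell_1+\dots+\ell_d$, $\widetilde{\ell}\in\{0,1\}^d$ has $\widetilde{\ell}_j=0$ if $\ell_j$ is even and $\widetilde{\ell}_j=1$ if $\ell_j$ is odd, $(-1)^n\widetilde{\ell}=((-1)^{n_1}\widetilde{\ell}_1,\dots,(-1)^{n_d}\widetilde{\ell}_d)$ and $|(n+1/2)\widetilde{\ell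}|=\sum_{j=1}^d(n_j+1/2)\widetilde{\ell}_j$.
   Context: $\mathbb{N}=\{0,1,2,\dots\}$; $\lfloor\cdot\rfloor$ is the floor function. The exponent $|\ell|/2+|(n+1/2)\widetilde\ell|$ is always an integer. *)

theory Defs
  imports "HOL-Analysis.Analysis"
begin

text \<open>Index conventions: coordinates and factors are indexed by j in {0..<d}
  (the paper uses 1..d). Points of the d-dimensional set are functions nat => real,
  only the components j < d matter.\<close>

definition Xset :: "ereal \<Rightarrow> real set" where
  "Xset c = {x. 0 < x \<and> ereal x < c}"

definition Xsym :: "ereal \<Rightarrow> real set" where
  "Xsym c = {x. x \<noteq> 0 \<and> ereal \<bar>x\<bar> < c}"

definition Ck_on :: "nat \<Rightarrow> real set \<Rightarrow> (real \<Rightarrow> real) \<Rightarrow> bool" where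
  "Ck_on k S f \<longleftrightarrow>
     (\<forall>m<k. \<forall>x\<in>S. ((deriv ^^ m) f) differentiable (at x)) \<and> continuous_on S ((deriv ^^ k) f)"

definition Cinf_on :: "real set \<Rightarrow> (real \<Rightarrow> real) \<Rightarrow> bool" where
  "Cinf_on S f \<longleftrightarrow> (\<forall>k. Ck_on k S f)"

definition mu :: "real set \<Rightarrow> (real \<Rightarrow> real) \<Rightarrow> real measure" where
  "mu S w = density (restrict_space lborel S) (\<lambda>x. ennreal (w x))"

definition memL2 :: "real measure \<Rightarrow> (real \<Rightarrow> real) \<Rightarrow> bool" where
  "memL2 M f \<longleftrightarrow> f \<in> borel_measurable M \<and> integrable M (\<lambda>x. (f x)\<^sup>2)"

definition ipL2 :: "real measure \<Rightarrow> (real \<Rightarrow> real) \<Rightarrow> (real \<Rightarrow> real) \<Rightarrow> real" where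
  "ipL2 M f g = (\<integral>x. f x * g x \<partial>M)"

definition orthonormal_basis_L2 :: "real measure \<Rightarrow> (nat \<Rightarrow> real \<Rightarrow> real) \<Rightarrow> bool" where
  "orthonormal_basis_L2 M \<phi> \<longleftrightarrow>
     (\<forall>k. memL2 M (\<phi> k)) \<and>
     (\<forall>k m. ipL2 M (\<phi> k) (\<phi> m) = (if k = m then 1 else 0)) \<and>
     (\<forall>f. memL2 M f \<and> (\<forall>k. ipL2 M f (\<phi> k) = 0) \<longrightarrow> (AE x in M. f x = 0))"

definition even_ext :: "(real \<Rightarrow> real) \<Rightarrow> real \<Rightarrow> real" where
  "even_ext f x = f \<bar>x\<bar>"

definition odd_ext :: "(real \<Rightarrow> real) \<Rightarrow> real \<Rightarrow> real" where
  "odd_ext f x = sgn x * f \<bar>x\<bar>"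

definition delta :: "(real \<Rightarrow> real) \<Rightarrow> (real \<Rightarrow> real) \<Rightarrow> (real \<Rightarrow> real) \<Rightarrow> real \<Rightarrow> real" where
  "delta p q f x = p x * deriv f x + q x * f x"

definition delta_star :: "(real \<Rightarrow> real) \<Rightarrow> (real \<Rightarrow> real) \<Rightarrow> (real \<Rightarrow> real) \<Rightarrow> (real \<Rightarrow> real) \<Rightarrow> real \<Rightarrow> real" where
  "delta_star w p q g x =
     - p x * deriv g x + q x * g x - p x * (deriv w x / w x) * g x - deriv p x * g x"

definition Phi1 :: "real \<Rightarrow> (nat \<Rightarrow> real) \<Rightarrow> (real \<Rightarrow> real) \<Rightarrow> (real \<Rightarrow> real)
                    \<Rightarrow> (nat \<Rightarrow> real \<Rightarrow> real) \<Rightarrow> nat \<Rightarrow> real \<Rightarrow> real" where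
  "Phi1 a lam p q \<phi> n x =
     (if even n then (1 / sqrt 2) * even_ext (\<phi> (n div 2)) x
      else - (1 / sqrt 2) * (lam ((n + 1) div 2) - a) powr (- 1 / 2)
             * delta (even_ext p) (odd_ext q) (even_ext (\<phi> ((n + 1) div 2))) x)"

definition PhiZ :: "nat \<Rightarrow> (nat \<Rightarrow> real) \<Rightarrow> (nat \<Rightarrow> nat \<Rightarrow> real) \<Rightarrow> (nat \<Rightarrow> real \<Rightarrow> real)
                    \<Rightarrow> (nat \<Rightarrow> real \<Rightarrow> real) \<Rightarrow> (nat \<Rightarrow> nat \<Rightarrow> real \<Rightarrow> real)
                    \<Rightarrow> (nat \<Rightarrow> int) \<Rightarrow> (nat \<Rightarrow> real) \<Rightarrow> real" where
  "PhiZ d a lam p q \<phi> m x =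
     (if \<forall>j<d. 0 \<le> m j
      then \<Prod>j<d. Phi1 (a j) (lam j) (p j) (q j) (\<phi> j) (nat (m j)) (x j)
      else 0)"

definition refl :: "nat \<Rightarrow> (nat \<Rightarrow> real) \<Rightarrow> nat \<Rightarrow> real" where
  "refl j x = x(j := - x j)"

definition Dop :: "(nat \<Rightarrow> real \<Rightarrow> real) \<Rightarrow> (nat \<Rightarrow> real \<Rightarrow> real) \<Rightarrow> (nat \<Rightarrow> real \<Rightarrow> real)
                   \<Rightarrow> nat \<Rightarrow> ((nat \<Rightarrow> real) \<Rightarrow> real) \<Rightarrow> (nat \<Rightarrow> real) \<Rightarrow> real" where
  "Dop w p q j f x =
     (let pe = even_ext (p j); we = even_ext (w j); qe = odd_ext (q j); t = x j in
        pe t * deriv (\<lambda>s. f (x(j := s))) t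
        + qe t * ((f x + f (refl j x)) / 2)
        + (pe t * (deriv we t / we t) + deriv pe t - qe t) * ((f x - f (refl j x)) / 2))"

definition Dpow :: "nat \<Rightarrow> (nat \<Rightarrow> real \<Rightarrow> real) \<Rightarrow> (nat \<Rightarrow> real \<Rightarrow> real) \<Rightarrow> (nat \<Rightarrow> real \<Rightarrow> real)
                    \<Rightarrow> (nat \<Rightarrow> nat) \<Rightarrow> ((nat \<Rightarrow> real) \<Rightarrow> real) \<Rightarrow> (nat \<Rightarrow> real) \<Rightarrow> real" where
  "Dpow d w p q l f = foldr (\<lambda>j g. (Dop w p q j ^^ l j) g) [0..<d] f"

definition tilde :: "(nat \<Rightarrow> nat) \<Rightarrow> nat \<Rightarrow> nat" where
  "tilde l j = (if even (l j) then 0 else 1)"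

end

theory Submission
  imports Defs
begin


lemma cont_ae_zero:
  fixes g w :: "real \<Rightarrow> real" and X :: "real set"
  assumes Xo: "open X"
    and wpos: "\<forall>y\<in>X. w y > 0" and wc: "continuous_on X w"
    and gc: "continuous_on X g"
    and L2: "memL2 (density (restrict_space lborel X) (\<lambda>x. ennreal (w x))) g"
    and i0: "ipL2 (density (restrict_space lborel X) (\<lambda>x. ennreal (w x))) g g = 0"
    and t: "t \<in> X"
  shows "g t = 0"
proof (rule ccontr)
  assume gt: "g t \<noteq> 0"
  let ?M = "density (restrict_space lborel X) (\<lambda>x. ennreal (w x))"
  have Xb: "X \<in> sets borel" using Xo by auto
  have int: "integrable ?M (\<lambda>x. (g x)\<^sup>2)" using L2 unfolding memL2_def by auto
  have "integral\<^sup>L ?M (\<lambda>x. (g x)\<^sup>2) = 0" using i0 unfolding ipL2_def by (simp add: power2_eq_square)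
  then have "AE x in ?M. (g x)\<^sup>2 = 0"
    using integral_nonneg_eq_0_iff_AE[OF int] by auto
  then have ae1: "AE x in ?M. g x = 0" by simp
  have wm: "(\<lambda>x. ennreal (w x)) \<in> borel_measurable (restrict_space lborel X)"
  proof -
    have "w \<in> borel_measurable (restrict_space borel X)"
      by (rule borel_measurable_continuous_on_restrict[OF wc])
    then have "w \<in> borel_measurable (restrict_space lborel X)"
      by (simp add: measurable_def space_restrict_space sets_restrict_space)
    then show ?thesis by simp
  qed
  have "AE x in restrict_space lborel X. 0 < ennreal (w x) \<longrightarrow> g x = 0"
    using ae1 AE_density[OF wm] by auto
  then have "AE x in lborel. x \<in> X \<longrightarrow> 0 < ennreal (w x) \<longrightarrow> g x = 0"
    using AE_restrict_space_iff[of X lborel] Xb by auto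
  then have ae2: "AE x in lborel. x \<in> X \<longrightarrow> g x = 0"
    by eventually_elim (use wpos in auto)
  have "isCont g t" using gc t Xo by (simp add: continuous_on_eq_continuous_at)
  then obtain e1 where e1: "e1 > 0" "\<forall>y. dist t y < e1 \<longrightarrow> g y \<noteq> 0"
    using continuous_at_avoid gt by blast
  obtain e2 where e2: "e2 > 0" "ball t e2 \<subseteq> X" using Xo t openE by blast
  define e where "e = min e1 e2"
  have ep: "e > 0" using e1 e2 by (simp add: e_def)
  have sub: "\<And>y. y \<in> {t-e<..<t+e} \<Longrightarrow> y \<in> X \<and> g y \<noteq> 0"
  proof -
    fix y assume "y \<in> {t-e<..<t+e}"
    then have "dist t y < e1" "dist t y < e2" by (auto simp: dist_real_def e_def abs_less_iff)
    then show "y \<in> X \<and> g y \<noteq> 0" using e1 e2 by auto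
  qed
  from ae2 obtain N where N: "{x \<in> space lborel. \<not> (x \<in> X \<longrightarrow> g x = 0)} \<subseteq> N"
    "emeasure lborel N = 0" "N \<in> sets lborel"
    by (auto elim!: AE_E)
  have "{t-e<..<t+e} \<subseteq> N" using N(1) sub by auto
  then have "emeasure lborel {t-e<..<t+e} \<le> emeasure lborel N"
    using N(3) by (intro emeasure_mono) auto
  then show False using N(2) ep by simp
qed



lemma rdiff_iff: "(f::real\<Rightarrow>real) differentiable at x \<longleftrightarrow> f field_differentiable at x"
  by (metis DERIV_deriv_iff_real_differentiable DERIV_deriv_iff_field_differentiable)

lemma rdiff_D: "(f::real\<Rightarrow>real) differentiable at x \<Longrightarrow> DERIV f x :> deriv f x"
  by (simp add: DERIV_deriv_iff_real_differentiable)

lemma DERIV_diff: "DERIV (f::real\<Rightarrow>real) x :> D \<Longrightarrow> f differentiable at x"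
  using DERIV_deriv_iff_real_differentiable DERIV_imp_deriv by metis

lemma diff_cong_ev:
  assumes "eventually (\<lambda>x. f x = g x) (nhds t)" "(g::real\<Rightarrow>real) differentiable at t"
  shows "f differentiable at t"
proof -
  have "DERIV g t :> deriv g t" using assms(2) by (rule rdiff_D)
  then have "DERIV f t :> deriv g t" using DERIV_cong_ev[OF refl assms(1) refl] by simp
  then show ?thesis by (rule DERIV_diff)
qed

lemma open_Xsym: "open (Xsym c)"
proof -
  have "Xsym c = {x. x \<noteq> 0} \<inter> (\<lambda>x. ereal \<bar>x\<bar>) -` {..<c}"
    by (auto simp: Xsym_def)
  moreover have "open ((\<lambda>x::real. ereal \<bar>x\<bar>) -` {..<c})"
    by (rule open_vimage) (auto intro!: continuous_intros)
  moreover have "open {x::real. x \<noteq> 0}" by (simp add: open_Collect_neq)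
  ultimately show ?thesis by auto
qed

lemma open_Xset: "open (Xset c)"
proof -
  have "Xset c = {x. 0 < x} \<inter> (\<lambda>x. ereal x) -` {..<c}"
    by (auto simp: Xset_def)
  moreover have "open ((\<lambda>x::real. ereal x) -` {..<c})"
    by (rule open_vimage) (auto intro!: continuous_intros)
  moreover have "open {x::real. 0 < x}" by (simp add: open_Collect_less)
  ultimately show ?thesis by auto
qed

lemma Xsym_pos: "t \<in> Xsym c \<Longrightarrow> t > 0 \<Longrightarrow> t \<in> Xset c"
  by (auto simp: Xsym_def Xset_def)
lemma Xsym_neg: "t \<in> Xsym c \<Longrightarrow> t < 0 \<Longrightarrow> -t \<in> Xset c"
  by (auto simp: Xsym_def Xset_def)
lemma Xsym_uminus: "t \<in> Xsym c \<Longrightarrow> -t \<in> Xsym c"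
  by (auto simp: Xsym_def)
lemma Xsym_cases: "t \<in> Xsym c \<Longrightarrow> (t > 0 \<Longrightarrow> P) \<Longrightarrow> (t < 0 \<Longrightarrow> P) \<Longrightarrow> P"
  by (auto simp: Xsym_def) (metis linorder_neqE_linordered_idom)

lemma ev_pos: "t > (0::real) \<Longrightarrow> eventually (\<lambda>s. s > 0) (nhds t)"
  using eventually_nhds_in_open[of "{0<..}" t] by simp
lemma ev_neg: "t < (0::real) \<Longrightarrow> eventually (\<lambda>s. s < 0) (nhds t)"
  using eventually_nhds_in_open[of "{..<0}" t] by simp
lemma ev_in_open: "open S \<Longrightarrow> t \<in> S \<Longrightarrow> eventually (\<lambda>s. s \<in> S) (nhds t)"
  by (simp add: eventually_nhds_in_open)

lemma ev_even_pos: "t > 0 \<Longrightarrow> eventually (\<lambda>s. even_ext f s = f s) (nhds t)"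
  using ev_pos by (rule eventually_mono) (auto simp: even_ext_def)
lemma ev_even_neg: "t < 0 \<Longrightarrow> eventually (\<lambda>s. even_ext f s = f (-s)) (nhds t)"
  using ev_neg by (rule eventually_mono) (auto simp: even_ext_def)
lemma ev_odd_pos: "t > 0 \<Longrightarrow> eventually (\<lambda>s. odd_ext f s = f s) (nhds t)"
  using ev_pos by (rule eventually_mono) (auto simp: odd_ext_def)
lemma ev_odd_neg: "t < 0 \<Longrightarrow> eventually (\<lambda>s. odd_ext f s = - f (-s)) (nhds t)"
  using ev_neg by (rule eventually_mono) (auto simp: odd_ext_def)

lemma DERIV_reflect:
  assumes "(f::real\<Rightarrow>real) differentiable at (-t)"
  shows "DERIV (\<lambda>s. f (-s)) t :> - deriv f (-t)"
proof -
  have "DERIV f (-t) :> deriv f (-t)" using assms by (rule rdiff_D)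
  then have "DERIV (\<lambda>s. f (-s)) t :> deriv f (-t) * (-1)"
    using DERIV_chain2[OF \<open>DERIV f (-t) :> _\<close> DERIV_minus[OF DERIV_ident[where F="at t"]]] by simp
  then show ?thesis by simp
qed

lemma deriv_even_pos: "t > 0 \<Longrightarrow> deriv (even_ext f) t = deriv f t"
  by (rule deriv_cong_ev[OF ev_even_pos refl])

lemma deriv_even_neg:
  assumes "t < 0" "f differentiable at (-t)"
  shows "deriv (even_ext f) t = - deriv f (-t)"
proof -
  have "DERIV (even_ext f) t :> - deriv f (-t)"
    using DERIV_reflect[OF assms(2)] DERIV_cong_ev[OF refl ev_even_neg[OF assms(1)] refl] by simp
  then show ?thesis by (rule DERIV_imp_deriv)
qed

lemma diff_even_pos: "t > 0 \<Longrightarrow> f differentiable at t \<Longrightarrow> even_ext f differentiable at t"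
  by (rule diff_cong_ev[OF ev_even_pos])
lemma diff_even_neg: "t < 0 \<Longrightarrow> f differentiable at (-t) \<Longrightarrow> even_ext f differentiable at t"
  by (rule diff_cong_ev[OF ev_even_neg]) (auto intro: DERIV_diff DERIV_reflect)



definition D1 :: "(real \<Rightarrow> real) \<Rightarrow> (real \<Rightarrow> real) \<Rightarrow> (real \<Rightarrow> real) \<Rightarrow> (real \<Rightarrow> real) \<Rightarrow> real \<Rightarrow> real" where
  "D1 w p q g t =
     (let pe = even_ext p; we = even_ext w; qe = odd_ext q in
        pe t * deriv g t + qe t * ((g t + g (-t)) / 2)
        + (pe t * (deriv we t / we t) + deriv pe t - qe t) * ((g t - g (-t)) / 2))"

definition EE :: "(real \<Rightarrow> real) \<Rightarrow> (real \<Rightarrow> real) \<Rightarrow> (real \<Rightarrow> real) \<Rightarrow> real \<Rightarrow> (real \<Rightarrow> real) \<Rightarrow> real \<Rightarrow> real" where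
  "EE w p q e h u = p u * deriv h u + q u * ((1 + e) / 2) * h u
      + (p u * (deriv w u / w u) + deriv p u - q u) * ((1 - e) / 2) * h u"

lemma D1_pos:
  assumes "t > 0" "eventually (\<lambda>s. f s = h s) (nhds t)" "f (-t) = e * h t"
  shows "D1 w p q f t = EE w p q e h t"
proof -
  have ft: "f t = h t" using assms(2) eventually_nhds_x_imp_x by blast
  have df: "deriv f t = deriv h t" using assms(2) by (rule deriv_cong_ev) simp
  have "even_ext p t = p t" "even_ext w t = w t" "odd_ext q t = q t"
    using assms(1) by (auto simp: even_ext_def odd_ext_def)
  moreover have "deriv (even_ext p) t = deriv p t" "deriv (even_ext w) t = deriv w t"
    using assms(1) by (auto simp: deriv_even_pos)
  ultimately show ?thesis using ft df assms(3)
    by (simp add: D1_def EE_def Let_def algebra_simps add_divide_distrib diff_divide_distrib)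
qed

lemma D1_neg:
  assumes "t < 0" "eventually (\<lambda>s. f s = e * h (-s)) (nhds t)" "f (-t) = h (-t)"
    and "e = 1 \<or> e = -1"
    and "h differentiable at (-t)" "p differentiable at (-t)" "w differentiable at (-t)"
  shows "D1 w p q f t = - e * EE w p q e h (-t)"
proof -
  have ft: "f t = e * h (-t)" using assms(2) eventually_nhds_x_imp_x by blast
  have "DERIV (\<lambda>s. e * h (-s)) t :> e * (- deriv h (-t))"
    by (intro DERIV_cmult DERIV_reflect assms)
  then have "DERIV f t :> e * (- deriv h (-t))"
    using DERIV_cong_ev[OF refl assms(2) refl] by simp
  then have df: "deriv f t = - e * deriv h (-t)" by (simp add: DERIV_imp_deriv)
  have "even_ext p t = p (-t)" "even_ext w t = w (-t)" "odd_ext q t = - q (-t)"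
    using assms(1) by (auto simp: even_ext_def odd_ext_def)
  moreover have "deriv (even_ext p) t = - deriv p (-t)" "deriv (even_ext w) t = - deriv w (-t)"
    using assms by (auto simp: deriv_even_neg)
  ultimately show ?thesis using ft df assms(3) assms(4)
    by (auto simp: D1_def EE_def Let_def algebra_simps add_divide_distrib diff_divide_distrib)
qed



definition P1 :: "real \<Rightarrow> (nat \<Rightarrow> real) \<Rightarrow> (real \<Rightarrow> real) \<Rightarrow> (real \<Rightarrow> real)
                    \<Rightarrow> (nat \<Rightarrow> real \<Rightarrow> real) \<Rightarrow> int \<Rightarrow> real \<Rightarrow> real" where
  "P1 a lam p q \<phi> m t = (if m < 0 then 0 else Phi1 a lam p q \<phi> (nat m) t)"

definition sig :: "nat \<Rightarrow> real" where "sig n = (if even n then -1 else 1)"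
definition eps :: "nat \<Rightarrow> real" where "eps n = (if even n then 1 else -1)"

locale od =
  fixes c :: ereal and w p q :: "real \<Rightarrow> real" and a :: real and lam :: "nat \<Rightarrow> real"
    and \<phi> :: "nat \<Rightarrow> real \<Rightarrow> real"
  assumes wpos: "\<forall>y\<in>Xset c. w y > 0"
    and wd: "\<forall>y\<in>Xset c. w differentiable at y"
    and pd: "\<forall>y\<in>Xset c. p differentiable at y"
    and qd: "\<forall>y\<in>Xset c. q differentiable at y"
    and phid: "\<forall>k. \<forall>y\<in>Xset c. \<phi> k differentiable at y \<and> deriv (\<phi> k) differentiable at y"
    and eigen: "\<forall>k. \<forall>y\<in>Xset c.
        a * \<phi> k y + delta_star w p q (delta p q (\<phi> k)) y = lam k * \<phi> k y"
    and lmono: "strict_mono lam"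
    and a_eq: "a = lam 0"
    and d0: "\<forall>y\<in>Xset c. delta p q (\<phi> 0) y = 0"
begin

abbreviation "g k \<equiv> delta p q (\<phi> k)"

lemma g_eq: "g k = (\<lambda>x. p x * deriv (\<phi> k) x + q x * \<phi> k x)"
  by (simp add: delta_def fun_eq_iff)

lemma gd: "y \<in> Xset c \<Longrightarrow> g k differentiable at y"
  unfolding g_eq using pd qd phid by (auto intro!: derivative_intros)

definition K :: "nat \<Rightarrow> real" where
  "K k = - (1 / sqrt 2) * (lam k - a) powr (- 1 / 2)"

definition Pp :: "nat \<Rightarrow> real \<Rightarrow> real" where
  "Pp n u = (if even n then (1 / sqrt 2) * \<phi> (n div 2) u else K ((n + 1) div 2) * g ((n + 1) div 2) u)"

definition Q :: "int \<Rightarrow> real \<Rightarrow> real" where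
  "Q m u = (if m < 0 then 0 else Pp (nat m) u)"


lemma Ppd: "y \<in> Xset c \<Longrightarrow> Pp n differentiable at y"
proof (cases "even n")
  case True
  assume y: "y \<in> Xset c"
  then show ?thesis using True phid unfolding Pp_def by (auto intro!: derivative_intros)
next
  case False
  assume y: "y \<in> Xset c"
  then show ?thesis using False gd[OF y] unfolding Pp_def by (auto intro!: derivative_intros)
qed

lemma P_pos: "t > 0 \<Longrightarrow> eventually (\<lambda>s. Phi1 a lam p q \<phi> n s = Pp n s) (nhds t)"
proof -
  assume t: "t > 0"
  show ?thesis using ev_pos[OF t]
  proof (rule eventually_mono)
    fix s :: real assume s: "s > 0"
    have "delta (even_ext p) (odd_ext q) (even_ext (\<phi> k)) s = g k s" for k
      using s by (simp add: delta_def deriv_even_pos) (simp add: even_ext_def odd_ext_def)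
    then show "Phi1 a lam p q \<phi> n s = Pp n s"
      using s by (simp add: Phi1_def Pp_def K_def even_ext_def)
  qed
qed

lemma P_neg: "t < 0 \<Longrightarrow> t \<in> Xsym c \<Longrightarrow> eventually (\<lambda>s. Phi1 a lam p q \<phi> n s = eps n * Pp n (-s)) (nhds t)"
proof -
  assume t: "t < 0" "t \<in> Xsym c"
  have "eventually (\<lambda>s. s < 0 \<and> s \<in> Xsym c) (nhds t)"
    using ev_neg[OF t(1)] ev_in_open[OF open_Xsym t(2)] by (rule eventually_conj)
  then show ?thesis
  proof (rule eventually_mono)
    fix s :: real assume s: "s < 0 \<and> s \<in> Xsym c"
    then have sx: "-s \<in> Xset c" by (auto intro: Xsym_neg)
    have "delta (even_ext p) (odd_ext q) (even_ext (\<phi> k)) s = - g k (-s)" for k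
      using s sx phid by (simp add: delta_def deriv_even_neg) (simp add: even_ext_def odd_ext_def)
    then show "Phi1 a lam p q \<phi> n s = eps n * Pp n (-s)"
      using s by (simp add: Phi1_def Pp_def K_def even_ext_def eps_def)
  qed
qed

lemma lam_gt: "k \<ge> 1 \<Longrightarrow> lam k > a"
proof -
  assume k: "k \<ge> 1"
  have "lam 0 < lam k" using lmono k by (simp add: strict_mono_less)
  then show ?thesis using a_eq by simp
qed

lemma powr_half: "L > 0 \<Longrightarrow> L powr (- 1 / 2) * L = sqrt L"
  "L > 0 \<Longrightarrow> sqrt L * L powr (- 1 / 2) = 1"
proof -
  assume L: "L > 0"
  have h: "L powr (1 / 2) = sqrt L" by (rule powr_half_sqrt) (use L in simp)
  have "L powr (- 1 / 2) = inverse (L powr (1 / 2))" using powr_minus[of L "1/2"] by simp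
  then have e: "L powr (- 1 / 2) = inverse (sqrt L)" using h by simp
  have s0: "sqrt L \<noteq> 0" using L by simp
  show "L powr (- 1 / 2) * L = sqrt L" unfolding e
    by (metis real_div_sqrt divide_inverse mult.commute less_imp_le L)
  show "sqrt L * L powr (- 1 / 2) = 1" unfolding e using s0 by simp
qed


lemma core:
  assumes u: "u \<in> Xset c"
  shows "EE w p q (eps m) (Pp m) u = sig m * sqrt (lam ((m + 1) div 2) - a) * Q (int m - (-1)^m) u"
proof (cases "even m")
  case True
  then obtain k where m: "m = 2 * k" by blast
  have Pf: "Pp m = (\<lambda>u. (1 / sqrt 2) * \<phi> k u)" using m by (simp add: Pp_def fun_eq_iff)
  have dP: "deriv (Pp m) u = (1 / sqrt 2) * deriv (\<phi> k) u"
    unfolding Pf by (rule deriv_cmult) (use phid u in \<open>simp add: rdiff_iff\<close>)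
  have lhs: "EE w p q (eps m) (Pp m) u = (1 / sqrt 2) * g k u"
    unfolding EE_def dP using True by (simp add: eps_def Pf delta_def algebra_simps)
  show ?thesis
  proof (cases "k = 0")
    case True
    then show ?thesis using lhs m d0 u by (simp add: Q_def)
  next
    case False
    then have L: "lam k - a > 0" using lam_gt[of k] by simp
    have mm: "int m - (-1) ^ m = int (2 * k - 1)" using m False by simp
    define n' where "n' = 2 * k - 1"
    have o: "odd n'" "(n' + 1) div 2 = k" using False by (auto simp: n'_def)
    have "Q (int m - (-1)^m) u = Pp n' u" unfolding mm n'_def[symmetric] Q_def by simp
    also have "\<dots> = K k * g k u" using o unfolding Pp_def by simp
    finally have "Q (int m - (-1)^m) u = K k * g k u" .
    moreover have "(m + 1) div 2 = k" using m by simp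
    ultimately have "sig m * sqrt (lam ((m + 1) div 2) - a) * Q (int m - (-1)^m) u
        = (1 / sqrt 2) * g k u * (sqrt (lam k - a) * (lam k - a) powr (- 1 / 2))"
      using True by (simp add: sig_def K_def mult_ac)
    then show ?thesis using lhs powr_half(2)[OF L] by simp
  qed
next
  case False
  then obtain k where m: "m = 2 * k + 1" by (metis oddE)
  define j where "j = k + 1"
  have mj: "(m + 1) div 2 = j" using m j_def by simp
  have L: "lam j - a > 0" using lam_gt[of j] j_def by simp
  have Pf: "Pp m = (\<lambda>u. K j * g j u)" using m mj by (simp add: Pp_def fun_eq_iff)
  have dP: "deriv (Pp m) u = K j * deriv (g j) u"
    unfolding Pf by (rule deriv_cmult) (use gd[OF u] in \<open>simp add: rdiff_iff\<close>)
  have eig: "a * \<phi> j u + delta_star w p q (g j) u = lam j * \<phi> j u" using eigen u by blast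
  have lhs: "EE w p q (eps m) (Pp m) u = - K j * (lam j - a) * \<phi> j u"
  proof -
    have "EE w p q (eps m) (Pp m) u = K j * (p u * deriv (g j) u
       + (p u * (deriv w u / w u) + deriv p u - q u) * g j u)"
      unfolding EE_def dP using False by (simp add: eps_def Pf algebra_simps)
    also have "\<dots> = K j * (- delta_star w p q (g j) u)"
      by (simp add: delta_star_def algebra_simps)
    also have "\<dots> = - K j * (lam j - a) * \<phi> j u"
    proof -
      have ds: "delta_star w p q (g j) u = lam j * \<phi> j u - a * \<phi> j u" using eig by linarith
      show ?thesis unfolding ds by (simp add: algebra_simps)
    qed
    finally show ?thesis .
  qed
  have mm: "int m - (-1) ^ m = int (2 * j)" using m j_def by simp
  have "Q (int m - (-1)^m) u = Pp (2 * j) u" unfolding mm Q_def by (simp add: nat_mult_distrib)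
  also have "\<dots> = (1 / sqrt 2) * \<phi> j u" unfolding Pp_def by simp
  finally have "Q (int m - (-1)^m) u = (1 / sqrt 2) * \<phi> j u" .
  then have "sig m * sqrt (lam ((m + 1) div 2) - a) * Q (int m - (-1)^m) u
      = (1 / sqrt 2) * \<phi> j u * sqrt (lam j - a)"
    using False mj by (simp add: sig_def mult_ac)
  moreover have "- K j * (lam j - a) * \<phi> j u = (1 / sqrt 2) * \<phi> j u * ((lam j - a) powr (- 1 / 2) * (lam j - a))"
    by (simp add: K_def mult_ac)
  ultimately show ?thesis using lhs powr_half(1)[OF L] by simp
qed

lemma eps_flip: "int m - (-1)^m \<ge> 0 \<Longrightarrow> eps (nat (int m - (-1)^m)) = - eps m"
proof (cases "even m")
  case True
  assume h: "int m - (-1)^m \<ge> 0"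
  then have "m \<ge> 1" using True by (cases m) auto
  then have "nat (int m - (-1)^m) = m - 1" using True by simp
  moreover have "odd (m - 1)" using True \<open>m \<ge> 1\<close> by simp
  ultimately show ?thesis using True by (simp add: eps_def)
next
  case False
  then have "nat (int m - (-1)^m) = m + 1" by simp
  then show ?thesis using False by (simp add: eps_def)
qed

lemma step:
  assumes t: "t \<in> Xsym c"
  shows "D1 w p q (P1 a lam p q \<phi> (int m)) t
       = sig m * sqrt (lam ((m + 1) div 2) - a) * P1 a lam p q \<phi> (int m - (-1)^m) t"
proof -
  have Pf: "P1 a lam p q \<phi> (int m) = Phi1 a lam p q \<phi> m" by (simp add: P1_def fun_eq_iff)
  have epm: "eps m = 1 \<or> eps m = -1" by (simp add: eps_def)
  show ?thesis
  proof (rule Xsym_cases[OF t])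
    assume tp: "t > 0"
    have tX: "t \<in> Xset c" using t tp by (rule Xsym_pos)
    have "Phi1 a lam p q \<phi> m (-t) = eps m * Pp m (- (-t))"
      using P_neg[of "-t" m] tp Xsym_uminus[OF t] eventually_nhds_x_imp_x by fastforce
    then have "D1 w p q (Phi1 a lam p q \<phi> m) t = EE w p q (eps m) (Pp m) t"
      using D1_pos[OF tp P_pos[OF tp]] by simp
    also have "\<dots> = sig m * sqrt (lam ((m + 1) div 2) - a) * Q (int m - (-1)^m) t"
      by (rule core[OF tX])
    also have "Q (int m - (-1)^m) t = P1 a lam p q \<phi> (int m - (-1)^m) t"
      using eventually_nhds_x_imp_x[OF P_pos[OF tp]] by (simp add: Q_def P1_def)
    finally show ?thesis unfolding Pf .
  next
    assume tn: "t < 0"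
    have tX: "-t \<in> Xset c" using t tn by (rule Xsym_neg)
    have "Phi1 a lam p q \<phi> m (-t) = Pp m (-t)"
      using eventually_nhds_x_imp_x[OF P_pos[of "-t"]] tn by simp
    then have "D1 w p q (Phi1 a lam p q \<phi> m) t = - eps m * EE w p q (eps m) (Pp m) (-t)"
      using D1_neg[OF tn P_neg[OF tn t] _ epm Ppd[OF tX]] pd wd tX by simp
    also have "\<dots> = - eps m * (sig m * sqrt (lam ((m + 1) div 2) - a) * Q (int m - (-1)^m) (-t))"
      by (simp only: core[OF tX])
    also have "\<dots> = sig m * sqrt (lam ((m + 1) div 2) - a) * P1 a lam p q \<phi> (int m - (-1)^m) t"
    proof (cases "int m - (-1)^m \<ge> 0")
      case True
      have "P1 a lam p q \<phi> (int m - (-1)^m) t = eps (nat (int m - (-1)^m)) * Pp (nat (int m - (-1)^m)) (-t)"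
        using True eventually_nhds_x_imp_x[OF P_neg[OF tn t]] by (simp add: P1_def)
      then show ?thesis using True eps_flip[OF True] by (simp add: Q_def)
    next
      case False
      then show ?thesis by (simp add: Q_def P1_def)
    qed
    finally show ?thesis unfolding Pf .
  qed
qed

lemma P1d:
  assumes t: "t \<in> Xsym c"
  shows "P1 a lam p q \<phi> M differentiable at t"
proof (cases "M < 0")
  case True
  then have "P1 a lam p q \<phi> M = (\<lambda>_. 0)" by (simp add: P1_def fun_eq_iff)
  then show ?thesis by simp
next
  case False
  then have Pf: "P1 a lam p q \<phi> M = Phi1 a lam p q \<phi> (nat M)" by (simp add: P1_def fun_eq_iff)
  show ?thesis unfolding Pf
  proof (rule Xsym_cases[OF t])
    assume tp: "t > 0"
    show "Phi1 a lam p q \<phi> (nat M) differentiable at t"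
      by (rule diff_cong_ev[OF P_pos[OF tp] Ppd[OF Xsym_pos[OF t tp]]])
  next
    assume tn: "t < 0"
    have "DERIV (\<lambda>s. eps (nat M) * Pp (nat M) (-s)) t :> eps (nat M) * (- deriv (Pp (nat M)) (-t))"
      by (intro DERIV_cmult DERIV_reflect Ppd Xsym_neg[OF t tn])
    then have "(\<lambda>s. eps (nat M) * Pp (nat M) (-s)) differentiable at t" by (rule DERIV_diff)
    then show "Phi1 a lam p q \<phi> (nat M) differentiable at t"
      by (rule diff_cong_ev[OF P_neg[OF tn t]])
  qed
qed

end


definition Sd :: "nat \<Rightarrow> ereal \<Rightarrow> (nat \<Rightarrow> real) set" where
  "Sd d c = {x. \<forall>j<d. x j \<in> Xsym c}"

lemma prod_upd_split:
  fixes d j :: nat and x :: "nat \<Rightarrow> real" and G :: "nat \<Rightarrow> real \<Rightarrow> real"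
  assumes "j < d"
  shows "(\<Prod>k<d. G k ((x(j := s)) k)) = (\<Prod>k\<in>{..<d}-{j}. G k (x k)) * G j s"
proof -
  have "(\<Prod>k<d. G k ((x(j := s)) k)) = G j ((x(j := s)) j) * (\<Prod>k\<in>{..<d}-{j}. G k ((x(j := s)) k))"
    by (rule prod.remove) (use assms in auto)
  then have "(\<Prod>k<d. G k ((x(j := s)) k)) = G j s * (\<Prod>k\<in>{..<d}-{j}. G k ((x(j := s)) k))"
    by simp
  also have "(\<Prod>k\<in>{..<d}-{j}. G k ((x(j := s)) k)) = (\<Prod>k\<in>{..<d}-{j}. G k (x k))"
    by (rule prod.cong) auto
  finally show ?thesis by simp
qed

lemma Dop_prod:
  fixes d j :: nat and x :: "nat \<Rightarrow> real" and G :: "nat \<Rightarrow> real \<Rightarrow> real"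
  assumes j: "j < d" and gd: "G j differentiable at (x j)"
  shows "Dop w p q j (\<lambda>y. C * (\<Prod>k<d. G k (y k))) x
       = C * (\<Prod>k\<in>{..<d}-{j}. G k (x k)) * D1 (w j) (p j) (q j) (G j) (x j)"
proof -
  define R where "R = (\<Prod>k\<in>{..<d}-{j}. G k (x k))"
  have e1: "(\<lambda>s. C * (\<Prod>k<d. G k ((x(j := s)) k))) = (\<lambda>s. (C * R) * G j s)"
    by (rule ext, subst prod_upd_split[OF j]) (simp add: R_def mult_ac)
  have dd: "deriv (\<lambda>s. (C * R) * G j s) (x j) = (C * R) * deriv (G j) (x j)"
    by (rule deriv_cmult) (use gd in \<open>simp add: rdiff_iff\<close>)
  have fx: "C * (\<Prod>k<d. G k (x k)) = C * R * G j (x j)"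
    using prod_upd_split[OF j, of G x "x j"] by (simp add: R_def)
  have fr: "C * (\<Prod>k<d. G k (refl j x k)) = C * R * G j (- x j)"
    using prod_upd_split[OF j, of G x "- x j"] by (simp add: R_def refl_def)
  show ?thesis
    unfolding Dop_def Let_def e1 dd fx fr D1_def R_def[symmetric]
    by (simp add: algebra_simps add_divide_distrib diff_divide_distrib)
qed

lemma Dop_local:
  assumes j: "j < d" and fg: "\<forall>y\<in>Sd d c. f y = g y" and x: "x \<in> Sd d c"
  shows "Dop w p q j f x = Dop w p q j g x"
proof -
  have xj: "x j \<in> Xsym c" using x j by (simp add: Sd_def)
  have ev: "eventually (\<lambda>s. f (x(j := s)) = g (x(j := s))) (nhds (x j))"
    using ev_in_open[OF open_Xsym xj]
  proof (rule eventually_mono)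
    fix s assume "s \<in> Xsym c"
    then have "x(j := s) \<in> Sd d c" using x by (simp add: Sd_def)
    then show "f (x(j := s)) = g (x(j := s))" using fg by blast
  qed
  have "refl j x \<in> Sd d c" using x Xsym_uminus by (simp add: Sd_def refl_def)
  then have "f (refl j x) = g (refl j x)" using fg by blast
  moreover have "f x = g x" using fg x by blast
  moreover have "deriv (\<lambda>s. f (x(j := s))) (x j) = deriv (\<lambda>s. g (x(j := s))) (x j)"
    by (rule deriv_cong_ev[OF ev refl])
  ultimately show ?thesis by (simp add: Dop_def)
qed

definition T :: "nat \<Rightarrow> nat \<Rightarrow> int" where
  "T r m = int m - (-1)^m * (if even r then 0 else 1)"
definition ee :: "nat \<Rightarrow> nat \<Rightarrow> nat" where
  "ee r m = (if even r then r div 2 else (r + 1) div 2 + m)"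

locale md =
  fixes d :: nat and c :: ereal and w p q :: "nat \<Rightarrow> real \<Rightarrow> real" and a :: "nat \<Rightarrow> real"
    and lam :: "nat \<Rightarrow> nat \<Rightarrow> real" and \<phi> :: "nat \<Rightarrow> nat \<Rightarrow> real \<Rightarrow> real"
  assumes odj: "\<And>j. j < d \<Longrightarrow> od c (w j) (p j) (q j) (a j) (lam j) (\<phi> j)"
begin

abbreviation "PP j M \<equiv> P1 (a j) (lam j) (p j) (q j) (\<phi> j) M"

definition co :: "nat \<Rightarrow> nat \<Rightarrow> nat \<Rightarrow> real" where
  "co j r m = (-1::real)^(ee r m) * sqrt (lam j ((m + 1) div 2) - a j) ^ r"

lemma one_step:
  assumes j: "j < d" and t: "t \<in> Xsym c"
  shows "D1 (w j) (p j) (q j) (PP j (T r m)) t * co j r m = co j (Suc r) m * PP j (T (Suc r) m) t"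
proof -
  note O = odj[OF j]
  define s where "s = sqrt (lam j ((m + 1) div 2) - a j)"
  show ?thesis
  proof (cases "even r")
    case True
    have st: "D1 (w j) (p j) (q j) (PP j (int m)) t = sig m * s * PP j (int m - (-1)^m) t"
      using od.step[OF O t, of m] by (simp add: s_def)
    have Tr: "T r m = int m" "T (Suc r) m = int m - (-1)^m" using True by (auto simp: T_def)
    have "ee (Suc r) m = ee r m + 1 + m" using True by (auto simp: ee_def elim!: evenE)
    then have "co j (Suc r) m = sig m * s * co j r m"
      by (simp add: co_def s_def sig_def power_add)
    then show ?thesis unfolding Tr st by (simp add: mult_ac)
  next
    case False
    have Tr: "T r m = int m - (-1)^m" "T (Suc r) m = int m" using False by (auto simp: T_def)
    show ?thesis
    proof (cases "int m - (-1)^m < 0")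
      case True
      have "(-1::int)^m \<le> 1" by (cases "even m") auto
      then have m0: "m = 0" using True by linarith
      have z: "PP j (int m - (-1)^m) = (\<lambda>_. 0)" using True by (simp add: P1_def fun_eq_iff)
      have "a j = lam j 0" using od.a_eq[OF O] .
      then have "co j (Suc r) m = 0" using m0 by (simp add: co_def)
      then show ?thesis unfolding Tr z by (simp add: D1_def)
    next
      case False
      define mm2 where "mm2 = nat (int m - (-1)^m)"
      have im: "int mm2 = int m - (-1)^m" using False by (simp add: mm2_def)
      have bk: "int mm2 - (-1)^mm2 = int m" and sm: "(mm2 + 1) div 2 = (m + 1) div 2"
        and sg: "(-1::real)^m * sig mm2 = 1"
      proof -
        have "int mm2 - (-1)^mm2 = int m \<and> (mm2 + 1) div 2 = (m + 1) div 2 \<and> (-1::real)^m * sig mm2 = 1"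
        proof (cases "even m")
          case True
          then have "m \<ge> 1" using False by (cases m) auto
          then have "mm2 = m - 1" using True by (simp add: mm2_def)
          then show ?thesis using True \<open>m \<ge> 1\<close> by (auto simp: sig_def elim!: evenE)
        next
          case False
          then have "mm2 = m + 1" by (simp add: mm2_def)
          then show ?thesis using False by (auto simp: sig_def elim!: oddE)
        qed
        then show "int mm2 - (-1)^mm2 = int m" "(mm2 + 1) div 2 = (m + 1) div 2"
          "(-1::real)^m * sig mm2 = 1" by auto
      qed
      have st: "D1 (w j) (p j) (q j) (PP j (int mm2)) t = sig mm2 * s * PP j (int m) t"
        using od.step[OF O t, of mm2] unfolding bk sm by (simp add: s_def)
      have "ee r m = ee (Suc r) m + m" using \<open>odd r\<close> by (auto simp: ee_def elim!: oddE)
      then have "co j r m * sig mm2 * s = co j (Suc r) m"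
        using sg by (simp add: co_def s_def power_add mult_ac)
      then show ?thesis unfolding Tr im[symmetric] st
        by (simp add: mult_ac)
    qed
  qed
qed

lemma iter:
  assumes j: "j < d" and f: "\<forall>x\<in>Sd d c. f x = C * (\<Prod>k<d. PP k (M k) (x k))"
    and Mj: "M j = int m"
  shows "\<forall>x\<in>Sd d c. (Dop w p q j ^^ r) f x = C * co j r m * (\<Prod>k<d. PP k ((M(j := T r m)) k) (x k))"
proof (induction r)
  case 0
  have "M(j := T 0 m) = M" using Mj by (auto simp: T_def)
  then show ?case using f by (simp add: co_def ee_def)
next
  case (Suc r)
  show ?case
  proof
    fix x assume x: "x \<in> Sd d c"
    have xj: "x j \<in> Xsym c" using x j by (simp add: Sd_def)
    define M' where "M' = M(j := T r m)"
    define R where "R = (\<Prod>k\<in>{..<d}-{j}. PP k (M k) (x k))"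
    have R': "(\<Prod>k\<in>{..<d}-{j}. PP k (M' k) (x k)) = R"
      unfolding R_def M'_def by (rule prod.cong) auto
    have "(Dop w p q j ^^ Suc r) f x = Dop w p q j ((Dop w p q j ^^ r) f) x" by simp
    also have "\<dots> = Dop w p q j (\<lambda>y. (C * co j r m) * (\<Prod>k<d. PP k (M' k) (y k))) x"
      by (rule Dop_local[OF j _ x]) (use Suc.IH in \<open>simp add: M'_def\<close>)
    also have "\<dots> = (C * co j r m) * R * D1 (w j) (p j) (q j) (PP j (M' j)) (x j)"
      using Dop_prod[OF j, of "\<lambda>k. PP k (M' k)" x w p q "C * co j r m"]
        od.P1d[OF odj[OF j] xj] R' by simp
    also have "\<dots> = C * R * (D1 (w j) (p j) (q j) (PP j (T r m)) (x j) * co j r m)"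
      by (simp add: M'_def mult_ac)
    also have "\<dots> = C * R * (co j (Suc r) m * PP j (T (Suc r) m) (x j))"
      by (simp only: one_step[OF j xj])
    also have "\<dots> = C * co j (Suc r) m * (\<Prod>k<d. PP k ((M(j := T (Suc r) m)) k) (x k))"
    proof -
      have "(\<Prod>k<d. PP k ((M(j := T (Suc r) m)) k) (x k))
          = PP j ((M(j := T (Suc r) m)) j) (x j) * (\<Prod>k\<in>{..<d}-{j}. PP k ((M(j := T (Suc r) m)) k) (x k))"
        by (rule prod.remove) (use j in auto)
      also have "(\<Prod>k\<in>{..<d}-{j}. PP k ((M(j := T (Suc r) m)) k) (x k)) = R"
        unfolding R_def by (rule prod.cong) auto
      finally show ?thesis by (simp add: mult_ac)
    qed
    finally show "(Dop w p q j ^^ Suc r) f x = C * co j (Suc r) m * (\<Prod>k<d. PP k ((M(j := T (Suc r) m)) k) (x k))" .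
  qed
qed

lemma fold_lem:
  assumes "distinct js" "set js \<subseteq> {..<d}"
    and f: "\<forall>x\<in>Sd d c. f x = (\<Prod>k<d. PP k (int (n k)) (x k))"
  shows "\<forall>x\<in>Sd d c. foldr (\<lambda>j g. (Dop w p q j ^^ l j) g) js f x
     = (\<Prod>j\<in>set js. co j (l j) (n j)) * (\<Prod>k<d. PP k (if k \<in> set js then T (l k) (n k) else int (n k)) (x k))"
  using assms(1,2)
proof (induction js)
  case Nil
  then show ?case using f by simp
next
  case (Cons j js)
  have j: "j < d" and nj: "j \<notin> set js" using Cons.prems by auto
  define M where "M = (\<lambda>k. if k \<in> set js then T (l k) (n k) else int (n k))"
  have IH: "\<forall>x\<in>Sd d c. foldr (\<lambda>j g. (Dop w p q j ^^ l j) g) js f x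
     = (\<Prod>j\<in>set js. co j (l j) (n j)) * (\<Prod>k<d. PP k (M k) (x k))"
    using Cons.IH Cons.prems by (simp add: M_def)
  have Mj: "M j = int (n j)" using nj by (simp add: M_def)
  have M': "M(j := T (l j) (n j)) = (\<lambda>k. if k \<in> set (j # js) then T (l k) (n k) else int (n k))"
    by (auto simp: M_def fun_eq_iff)
  have pr: "(\<Prod>j\<in>set (j # js). co j (l j) (n j)) = co j (l j) (n j) * (\<Prod>j\<in>set js. co j (l j) (n j))"
    using nj by simp
  show ?case
    using iter[OF j IH Mj, of "l j"] unfolding M' pr by (simp add: mult_ac)
qed

lemma Dpow_lem:
  assumes f: "\<forall>x\<in>Sd d c. f x = (\<Prod>k<d. PP k (int (n k)) (x k))"
  shows "\<forall>x\<in>Sd d c. Dpow d w p q l f x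
     = (\<Prod>j<d. co j (l j) (n j)) * (\<Prod>k<d. PP k (T (l k) (n k)) (x k))"
proof -
  have s: "set [0..<d] = {..<d}" by auto
  show ?thesis using fold_lem[of "[0..<d]" f n l, OF _ _ f] unfolding Dpow_def s by simp
qed

end



lemma Ck2_facts: "Ck_on 2 S f \<Longrightarrow> y \<in> S \<Longrightarrow> f differentiable at y \<and> deriv f differentiable at y"
  unfolding Ck_on_def
proof -
  assume h: "(\<forall>m<2. \<forall>x\<in>S. (deriv ^^ m) f differentiable at x) \<and> continuous_on S ((deriv ^^ 2) f)"
    and y: "y \<in> S"
  have "(deriv ^^ 0) f differentiable at y" by (rule h[THEN conjunct1, rule_format]) (use y in auto)
  moreover have "(deriv ^^ 1) f differentiable at y" by (rule h[THEN conjunct1, rule_format]) (use y in auto)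
  ultimately show ?thesis by simp
qed

lemma Ck1_facts: "Ck_on 1 S f \<Longrightarrow> y \<in> S \<Longrightarrow> f differentiable at y"
  unfolding Ck_on_def
proof -
  assume h: "(\<forall>m<1. \<forall>x\<in>S. (deriv ^^ m) f differentiable at x) \<and> continuous_on S ((deriv ^^ 1) f)"
    and y: "y \<in> S"
  have "(deriv ^^ 0) f differentiable at y" by (rule h[THEN conjunct1, rule_format]) (use y in auto)
  then show ?thesis by simp
qed

lemma diff_isCont: "(f::real\<Rightarrow>real) differentiable at y \<Longrightarrow> isCont f y"
  using differentiable_imp_continuous_within by blast

lemma PhiZ_prod: "PhiZ d a lam p q \<phi> M y = (\<Prod>k<d. P1 (a k) (lam k) (p k) (q k) (\<phi> k) (M k) (y k))"
proof (cases "\<forall>j<d. 0 \<le> M j")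
  case True
  then show ?thesis unfolding PhiZ_def by (auto intro!: prod.cong simp: P1_def)
next
  case False
  then obtain k where "k < d" "M k < 0" by auto
  then have "(\<Prod>k<d. P1 (a k) (lam k) (p k) (q k) (\<phi> k) (M k) (y k)) = 0"
    by (intro prod_zero) (auto simp: P1_def)
  moreover have "PhiZ d a lam p q \<phi> M y = 0" unfolding PhiZ_def using False by (subst if_not_P) auto
  ultimately show ?thesis by simp
qed

lemma ee_real: "real (ee r m) = real r / 2 + (real m + 1 / 2) * real (if even r then 0 else 1::nat)"
proof (cases "even r")
  case True
  then obtain i where "r = 2 * i" by blast
  then show ?thesis by (simp add: ee_def)
next
  case False
  then obtain i where "r = 2 * i + 1" by (metis oddE)
  then show ?thesis by (simp add: ee_def field_simps)
qed

theorem mainTheorem6: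
  fixes d :: nat and c :: ereal
    and w p q :: "nat \<Rightarrow> real \<Rightarrow> real" and a :: "nat \<Rightarrow> real"
    and \<phi> :: "nat \<Rightarrow> nat \<Rightarrow> real \<Rightarrow> real" and lam :: "nat \<Rightarrow> nat \<Rightarrow> real"
    and l n :: "nat \<Rightarrow> nat" and x :: "nat \<Rightarrow> real"
  assumes d: "d \<ge> 1"
    and c: "c > 0"
    and w: "\<forall>i<d. Ck_on 2 (Xset c) (w i) \<and> (\<forall>y\<in>Xset c. w i y > 0)"
    and p: "\<forall>i<d. Ck_on 2 (Xset c) (p i) \<and> (\<forall>y\<in>Xset c. p i y \<noteq> 0)"
    and q: "\<forall>i<d. Ck_on 1 (Xset c) (q i)"
    and a_nonneg: "\<forall>i<d. a i \<ge> 0"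
    and onb: "\<forall>i<d. orthonormal_basis_L2 (mu (Xset c) (w i)) (\<phi> i)"
    and smooth: "\<forall>i<d. \<forall>k. Cinf_on (Xset c) (\<phi> i k)"
    and eigen: "\<forall>i<d. \<forall>k. \<forall>y\<in>Xset c.
        a i * \<phi> i k y + delta_star (w i) (p i) (q i) (delta (p i) (q i) (\<phi> i k)) y
          = lam i k * \<phi> i k y"
    and lam_mono: "\<forall>i<d. strict_mono (lam i) \<and> filterlim (lam i) at_top sequentially"
    and delta_L2: "\<forall>i<d. \<forall>k. memL2 (mu (Xset c) (w i)) (delta (p i) (q i) (\<phi> i k))"
    and ibp: "\<forall>i<d. \<forall>k m.
        ipL2 (mu (Xset c) (w i)) (delta (p i) (q i) (\<phi> i k)) (delta (p i) (q i) (\<phi> i m))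
          = ipL2 (mu (Xset c) (w i)) (delta_star (w i) (p i) (q i) (delta (p i) (q i) (\<phi> i k))) (\<phi> i m)"
    and a_eq: "\<forall>i<d. a i = lam i 0"
    and l_ne: "\<exists>j<d. l j \<noteq> 0"
    and x: "\<forall>j<d. x j \<in> Xsym c"
  shows "Dpow d w p q l (PhiZ d a lam p q \<phi> (\<lambda>j. int (n j))) x
     = (-1::real) ^ nat \<lfloor>real (\<Sum>j<d. l j) / 2 + (\<Sum>j<d. (real (n j) + 1 / 2) * real (tilde l j))\<rfloor>
       * (\<Prod>j<d. sqrt (lam j ((n j + 1) div 2) - a j) ^ l j)
       * PhiZ d a lam p q \<phi> (\<lambda>j. int (n j) - (-1) ^ (n j) * int (tilde l j)) x"
proof -
  have od_all: "od c (w j) (p j) (q j) (a j) (lam j) (\<phi> j)" if j: "j < d" for j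
  proof (rule od.intro)
    have wC: "Ck_on 2 (Xset c) (w j)" and wp: "\<forall>y\<in>Xset c. w j y > 0" using w j by auto
    have pC: "Ck_on 2 (Xset c) (p j)" using p j by auto
    have qC: "Ck_on 1 (Xset c) (q j)" using q j by auto
    show "\<forall>y\<in>Xset c. w j y > 0" by (rule wp)
    show wd: "\<forall>y\<in>Xset c. w j differentiable at y" using Ck2_facts[OF wC] by blast
    show pd: "\<forall>y\<in>Xset c. p j differentiable at y" using Ck2_facts[OF pC] by blast
    show qd: "\<forall>y\<in>Xset c. q j differentiable at y" using Ck1_facts[OF qC] by blast
    show phid: "\<forall>k. \<forall>y\<in>Xset c. \<phi> j k differentiable at y \<and> deriv (\<phi> j k) differentiable at y"
    proof (intro allI ballI)
      fix k y assume y: "y \<in> Xset c"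
      have "Ck_on 2 (Xset c) (\<phi> j k)" using smooth j unfolding Cinf_on_def by blast
      then show "\<phi> j k differentiable at y \<and> deriv (\<phi> j k) differentiable at y" using Ck2_facts y by blast
    qed
    show "\<forall>k. \<forall>y\<in>Xset c. a j * \<phi> j k y + delta_star (w j) (p j) (q j) (delta (p j) (q j) (\<phi> j k)) y
          = lam j k * \<phi> j k y" using eigen j by blast
    show "strict_mono (lam j)" using lam_mono j by blast
    show aeq: "a j = lam j 0" using a_eq j by blast
    show "\<forall>y\<in>Xset c. delta (p j) (q j) (\<phi> j 0) y = 0"
    proof
      fix y assume y: "y \<in> Xset c"
      let ?g = "delta (p j) (q j) (\<phi> j 0)"
      let ?M = "mu (Xset c) (w j)"
      have geq: "?g = (\<lambda>x. p j x * deriv (\<phi> j 0) x + q j x * \<phi> j 0 x)"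
        by (simp add: delta_def fun_eq_iff)
      have wc: "continuous_on (Xset c) (w j)"
        using wd by (intro continuous_at_imp_continuous_on) (auto intro: diff_isCont)
      have gc: "continuous_on (Xset c) ?g" unfolding geq
        using pd qd phid
        by (intro continuous_at_imp_continuous_on ballI continuous_intros) (auto intro: diff_isCont)
      have sp: "space ?M = Xset c" by (simp add: mu_def space_restrict_space)
      have "ipL2 ?M ?g ?g = ipL2 ?M (delta_star (w j) (p j) (q j) ?g) (\<phi> j 0)"
        using ibp j by blast
      also have "\<dots> = (\<integral>x. 0 \<partial>?M)"
        unfolding ipL2_def
      proof (rule Bochner_Integration.integral_cong[OF refl])
        fix x assume "x \<in> space ?M"
        then have x: "x \<in> Xset c" using sp by simp
        have "a j * \<phi> j 0 x + delta_star (w j) (p j) (q j) ?g x = lam j 0 * \<phi> j 0 x"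
          using eigen j x by blast
        then have "delta_star (w j) (p j) (q j) ?g x = 0" using aeq by simp
        then show "delta_star (w j) (p j) (q j) ?g x * \<phi> j 0 x = 0" by simp
      qed
      also have "\<dots> = 0" by simp
      finally have i0: "ipL2 ?M ?g ?g = 0" .
      have L2: "memL2 ?M ?g" using delta_L2 j by blast
      show "?g y = 0"
        by (rule cont_ae_zero[OF open_Xset wp wc gc _ _ y]) (use L2 i0 in \<open>simp_all add: mu_def\<close>)
    qed
  qed
  interpret md d c w p q a lam \<phi> by (rule md.intro) (rule od_all)
  have xS: "x \<in> Sd d c" using x by (simp add: Sd_def)
  have f: "\<forall>y\<in>Sd d c. PhiZ d a lam p q \<phi> (\<lambda>j. int (n j)) y = (\<Prod>k<d. PP k (int (n k)) (y k))"
    by (simp add: PhiZ_prod)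
  have main: "Dpow d w p q l (PhiZ d a lam p q \<phi> (\<lambda>j. int (n j))) x
     = (\<Prod>j<d. co j (l j) (n j)) * (\<Prod>k<d. PP k (T (l k) (n k)) (x k))"
    using Dpow_lem[OF f] xS by blast
  have tgt: "PhiZ d a lam p q \<phi> (\<lambda>j. int (n j) - (-1) ^ (n j) * int (tilde l j)) x
       = (\<Prod>k<d. PP k (T (l k) (n k)) (x k))"
    unfolding PhiZ_prod by (rule prod.cong) (auto simp: T_def tilde_def)
  have cop: "(\<Prod>j<d. co j (l j) (n j)) = (-1::real) ^ (\<Sum>j<d. ee (l j) (n j))
       * (\<Prod>j<d. sqrt (lam j ((n j + 1) div 2) - a j) ^ l j)"
    by (simp add: co_def prod.distrib power_sum)
  have "real (\<Sum>j<d. ee (l j) (n j)) = real (\<Sum>j<d. l j) / 2 + (\<Sum>j<d. (real (n j) + 1 / 2) * real (tilde l j))"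
    by (simp add: ee_real tilde_def sum.distrib sum_divide_distrib)
  then have ex: "nat \<lfloor>real (\<Sum>j<d. l j) / 2 + (\<Sum>j<d. (real (n j) + 1 / 2) * real (tilde l j))\<rfloor>
      = (\<Sum>j<d. ee (l j) (n j))"
    by (metis floor_of_nat nat_int)
  show ?thesis unfolding main tgt cop ex ..
qed


end
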